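(* With the matrices defined in the context, $B\,Q_\beta=V_\beta\,B$; i.e. the diagram $C_1\xrightarrow{B}C_0$, $Q_\beta:C_1\to C_1$, $V_\beta:C_0\to C_0$, $C_1\xrightarrow{B}C_0$ commutes.
   Context: Setting. $I\subset\mathbb{R}$ compact interval; $f_i(x)=\rho_ix+\varrho_i$ ($i=1,\dots,n$), $0<|\rho_i|<1$, IFS with open set condition; $I$ is the union of a nonempty open interval $I_h$ (hole) and $f_1(I),\dots,f_n(I)$, with pairwise disjoint interiors and $I_h$ disjoint from the $f_i(I)$; $F(x)=f_i^{-1}(x)$ on $f_i(I)$. The laps and hole have endpoints $a_1<\dots<a_{n+2}$, hole $(a_h,a_{h+1})$; interior endpoints are turning/discontinuity points. Assume the forward orbit of every one-sided endpoint $a_i^\pm$ is finite. Markov partition: the orbit points and the $a_i$ cut $I$ into intervals $J_1,\dots,J_m$; $A=[a_{ij}]$, $a_{ij}=1$ iff $F(\mathrm{int}J_j)\supseteq\mathrm{int}J_i$; $Q_\beta=[a_{ij}|F'|_{J_j}|^{-\beta}]$, $\beta\in\mathbb{R}$. Points $y^{(1)},\dots,y^{(q)}$: the one-sided endpoints $a_1^+,a_2^-,a_2^+,\dots,a_{n+2}^-$ (with $a_i^-,a_i^+$ consecutive) together with all other points of their forward orbits, ordered along $I$; $C_0=\mathbb{R}^q$ with $y^{(i)}$ the $i$-th standard basis vector, $C_1=\mathbb{R}^m$ with basis $J_1,\dots,J_m$. $B$ is the $q\times m$ matrix with, in column $j$, $-1$ in row $i$ and $+1$ in row $i+1$ where $y^{(i)},y^{(i+1)}$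 are the lower and upper endpoints of $J_j$ (border map $\partial J_j=y^{(i+1)}-y^{(i)}$), other entries $0$. $V_\beta=[v_{ij}]$ ($q\times q$): if $F(y^{(j)})=y^{(i)}$, $v_{ij}=\varepsilon(y^{(j)})|F'(y^{(j)})|^{-\beta}$ with $\varepsilon$ the sign of $F'$ at $y^{(j)}$ (column zero for limits from inside the hole); for every pair of consecutive entries that are the two one-sided versions of a turning/discontinuity point between $y^{(j)}$ and $y^{(i)}$: if $y^{(i)}>y^{(j)}$, pair $y^{(k)},y^{(k+1)}$, $j\le k<i$, set $v_{kj}=v_{ij}$, $v_{k+1,j}=-v_{ij}$; if $y^{(i)}<y^{(j)}$, pair $y^{(k-1)},y^{(k)}$, $i<k\le j$, set $v_{k-1,j}=-v_{ij}$, $v_{kj}=v_{ij}$; all other entries $0$. *)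

theory Defs
  imports "HOL-Analysis.Analysis" "Jordan_Normal_Form.Matrix"
begin

definition ifs :: "(nat \<Rightarrow> real) \<Rightarrow> (nat \<Rightarrow> real) \<Rightarrow> nat \<Rightarrow> real \<Rightarrow> real" where
  "ifs rho vrho i x = rho i * x + vrho i"

definition finv :: "(nat \<Rightarrow> real) \<Rightarrow> (nat \<Rightarrow> real) \<Rightarrow> nat \<Rightarrow> real \<Rightarrow> real" where
  "finv rho vrho i x = (x - vrho i) / rho i"

text \<open>Points are pairs (x, s): s = 1 means x^+, s = -1 means x^-, s = 0 an ordinary
  (two-sided) point.  onlap i p: the point p (with its side) lies in lap f_i(I).\<close>
definition onlap :: "(nat \<Rightarrow> real) \<Rightarrow> (nat \<Rightarrow> real) \<Rightarrow> real \<Rightarrow> real \<Rightarrow> nat \<Rightarrow> real \<times> int \<Rightarrow> bool" where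
  "onlap rho vrho c d i p \<longleftrightarrow>
     fst p \<in> ifs rho vrho i ` {c..d} \<and>
     (snd p = 1 \<longrightarrow> (\<exists>e>0. {fst p..fst p + e} \<subseteq> ifs rho vrho i ` {c..d})) \<and>
     (snd p = -1 \<longrightarrow> (\<exists>e>0. {fst p - e..fst p} \<subseteq> ifs rho vrho i ` {c..d}))"

text \<open>Normal form: one-sided versions are kept only at the endpoints a_1,...,a_{n+2}.\<close>
definition nrm :: "(nat \<Rightarrow> real) \<Rightarrow> nat \<Rightarrow> real \<times> int \<Rightarrow> real \<times> int" where
  "nrm a n p = (if fst p \<in> a ` {2..n+1} then p
               else if fst p = a 1 then (fst p, 1)
               else if fst p = a (n+2) then (fst p, -1)
               else (fst p, 0))"

definition lapidx :: "(nat \<Rightarrow> real) \<Rightarrow> (nat \<Rightarrow> real) \<Rightarrow> real \<Rightarrow> real \<Rightarrow> nat \<Rightarrow> real \<times> int \<Rightarrow> nat" where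
  "lapidx rho vrho c d n p = (SOME i. i \<in> {1..n} \<and> onlap rho vrho c d i p)"

text \<open>The map F on (one-sided) points; None for points inside the hole.\<close>
definition Fpt :: "(nat \<Rightarrow> real) \<Rightarrow> (nat \<Rightarrow> real) \<Rightarrow> real \<Rightarrow> real \<Rightarrow> (nat \<Rightarrow> real) \<Rightarrow> nat
                   \<Rightarrow> real \<times> int \<Rightarrow> (real \<times> int) option" where
  "Fpt rho vrho c d a n p =
     (if \<exists>i\<in>{1..n}. onlap rho vrho c d i p then
        (let i = lapidx rho vrho c d n p in
         Some (nrm a n (finv rho vrho i (fst p), snd p * (if rho i > 0 then 1 else -1))))
      else None)"

definition orbit :: "(nat \<Rightarrow> real) \<Rightarrow> (nat \<Rightarrow> real) \<Rightarrow> real \<Rightarrow> real \<Rightarrow> (nat \<Rightarrow> real) \<Rightarrow> nat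
                   \<Rightarrow> real \<times> int \<Rightarrow> (real \<times> int) set" where
  "orbit rho vrho c d a n p =
     {p'. \<exists>k. ((\<lambda>z. Option.bind z (Fpt rho vrho c d a n)) ^^ k) (Some p) = Some p'}"

definition endpts :: "(nat \<Rightarrow> real) \<Rightarrow> nat \<Rightarrow> (real \<times> int) set" where
  "endpts a n = {(a 1, 1), (a (n+2), -1)} \<union> {(a k, s) | k s. k \<in> {2..n+1} \<and> s \<in> {-1, 1}}"

definition Yset :: "(nat \<Rightarrow> real) \<Rightarrow> (nat \<Rightarrow> real) \<Rightarrow> real \<Rightarrow> real \<Rightarrow> (nat \<Rightarrow> real) \<Rightarrow> nat
                   \<Rightarrow> (real \<times> int) set" where
  "Yset rho vrho c d a n = (\<Union>p\<in>endpts a n. orbit rho vrho c d a n p)"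

definition ptless :: "real \<times> int \<Rightarrow> real \<times> int \<Rightarrow> bool" where
  "ptless p p' \<longleftrightarrow> fst p < fst p' \<or> (fst p = fst p' \<and> snd p < snd p')"

text \<open>y^(1), ..., y^(q) ordered along I (x^- before x before x^+); index 0-based.\<close>
definition ylist :: "(nat \<Rightarrow> real) \<Rightarrow> (nat \<Rightarrow> real) \<Rightarrow> real \<Rightarrow> real \<Rightarrow> (nat \<Rightarrow> real) \<Rightarrow> nat
                   \<Rightarrow> (real \<times> int) list" where
  "ylist rho vrho c d a n = (THE ys. set ys = Yset rho vrho c d a n \<and> sorted_wrt ptless ys)"

text \<open>Markov partition points: orbit points and the a_i; J_j = [plist!j, plist!(j+1)].\<close>
definition plist :: "(nat \<Rightarrow> real) \<Rightarrow> (nat \<Rightarrow> real) \<Rightarrow> real \<Rightarrow> real \<Rightarrow> (nat \<Rightarrow> real) \<Rightarrow> nat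
                   \<Rightarrow> real list" where
  "plist rho vrho c d a n = sorted_list_of_set (fst ` Yset rho vrho c d a n \<union> a ` {1..n+2})"

definition Fimg :: "(nat \<Rightarrow> real) \<Rightarrow> (nat \<Rightarrow> real) \<Rightarrow> real \<Rightarrow> real \<Rightarrow> nat \<Rightarrow> real set \<Rightarrow> real set" where
  "Fimg rho vrho c d n S = (\<Union>i\<in>{1..n}. finv rho vrho i ` (S \<inter> ifs rho vrho i ` {c..d}))"

definition Qmat :: "(nat \<Rightarrow> real) \<Rightarrow> (nat \<Rightarrow> real) \<Rightarrow> real \<Rightarrow> real \<Rightarrow> (nat \<Rightarrow> real) \<Rightarrow> nat
                   \<Rightarrow> real \<Rightarrow> real mat" where
  "Qmat rho vrho c d a n \<beta> =
     (let P = plist rho vrho c d a n; m = length P - 1;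
          lapJ = (\<lambda>j. SOME i. i \<in> {1..n} \<and> {P!j..P!Suc j} \<subseteq> ifs rho vrho i ` {c..d})
      in mat m m (\<lambda>(i, j).
           if {P!i<..<P!Suc i} \<subseteq> Fimg rho vrho c d n {P!j<..<P!Suc j}
           then \<bar>1 / rho (lapJ j)\<bar> powr (-\<beta>) else 0))"

definition Bmat :: "(nat \<Rightarrow> real) \<Rightarrow> (nat \<Rightarrow> real) \<Rightarrow> real \<Rightarrow> real \<Rightarrow> (nat \<Rightarrow> real) \<Rightarrow> nat
                   \<Rightarrow> real mat" where
  "Bmat rho vrho c d a n =
     (let P = plist rho vrho c d a n; m = length P - 1; Y = ylist rho vrho c d a n; q = length Y
      in mat q m (\<lambda>(r, j).
           if Y!r = nrm a n (P!j, 1) then -1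
           else if Y!r = nrm a n (P!Suc j, -1) then 1 else 0))"

text \<open>pairAt Y r: Y!r, Y!(r+1) are the two one-sided versions of a turning/discontinuity point.\<close>
definition pairAt :: "(nat \<Rightarrow> real) \<Rightarrow> nat \<Rightarrow> (real \<times> int) list \<Rightarrow> nat \<Rightarrow> bool" where
  "pairAt a n Y r \<longleftrightarrow> Suc r < length Y \<and> fst (Y!r) = fst (Y!Suc r) \<and> fst (Y!r) \<in> a ` {2..n+1}
      \<and> snd (Y!r) = -1 \<and> snd (Y!Suc r) = 1"

definition Vmat :: "(nat \<Rightarrow> real) \<Rightarrow> (nat \<Rightarrow> real) \<Rightarrow> real \<Rightarrow> real \<Rightarrow> (nat \<Rightarrow> real) \<Rightarrow> nat
                   \<Rightarrow> real \<Rightarrow> real mat" where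
  "Vmat rho vrho c d a n \<beta> =
     (let Y = ylist rho vrho c d a n; q = length Y
      in mat q q (\<lambda>(r, j).
        if \<exists>i<q. Fpt rho vrho c d a n (Y!j) = Some (Y!i) then
          (let i = (THE i. i < q \<and> Fpt rho vrho c d a n (Y!j) = Some (Y!i));
               l = lapidx rho vrho c d n (Y!j);
               e = sgn (rho l) * \<bar>1 / rho l\<bar> powr (-\<beta>)
           in if r = i then e
              else if j < i then
                (if j \<le> r \<and> r < i \<and> pairAt a n Y r then e
                 else if 0 < r \<and> j \<le> r - 1 \<and> r - 1 < i \<and> pairAt a n Y (r - 1) then -e
                 else 0)
              else if i < j then
                (if i < r \<and> r \<le> j \<and> pairAt a n Y (r - 1) then e
                 else if i < r + 1 \<and> r + 1 \<le> j \<and> pairAt a n Y r then -e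
                 else 0)
              else 0)
        else 0))"

end

theory Submission
  imports Defs
begin


locale S =
  fixes n :: nat and rho vrho :: "nat \<Rightarrow> real" and c d :: real
    and a :: "nat \<Rightarrow> real" and h :: nat
  assumes n1: "n \<ge> 1"
    and rho: "\<forall>i\<in>{1..n}. 0 < \<bar>rho i\<bar> \<and> \<bar>rho i\<bar> < 1"
    and cd: "c \<le> d"
    and mono: "strict_mono_on {1..n+2} a"
    and hh: "h \<in> {1..n+1}"
    and cover: "{c..d} = {a h<..<a (h+1)} \<union> (\<Union>i\<in>{1..n}. ifs rho vrho i ` {c..d})"
    and disj: "\<forall>i\<in>{1..n}. \<forall>j\<in>{1..n}. i \<noteq> j \<longrightarrow>
           interior (ifs rho vrho i ` {c..d}) \<inter> interior (ifs rho vrho j ` {c..d}) = {}"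
    and holedisj: "\<forall>i\<in>{1..n}. {a h<..<a (h+1)} \<inter> ifs rho vrho i ` {c..d} = {}"
    and aset: "a ` {1..n+2} = {a h, a (h+1)} \<union> (\<Union>i\<in>{1..n}. {ifs rho vrho i c, ifs rho vrho i d})"
begin

definition "L i = ifs rho vrho i ` {c..d}"
definition "lo i = min (ifs rho vrho i c) (ifs rho vrho i d)"
definition "hi i = max (ifs rho vrho i c) (ifs rho vrho i d)"
definition "A = a ` {1..n+2}"

lemma btw_r: "x < (y::real) \<Longrightarrow> x < z \<Longrightarrow> \<exists>t. x < t \<and> t < y \<and> t < z"
  by (rule exI[of _ "(x + min y z)/2"]) (auto simp: min_def)
lemma btw_l: "y < (x::real) \<Longrightarrow> z < x \<Longrightarrow> \<exists>t. y < t \<and> z < t \<and> t < x"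
  by (rule exI[of _ "(x + max y z)/2"]) (auto simp: max_def)

lemma a_less_iff: "p \<in> {1..n+2} \<Longrightarrow> k \<in> {1..n+2} \<Longrightarrow> a p < a k \<longleftrightarrow> p < k"
  using strict_mono_on_less[OF mono] by blast
lemma a_le_iff: "p \<in> {1..n+2} \<Longrightarrow> k \<in> {1..n+2} \<Longrightarrow> a p \<le> a k \<longleftrightarrow> p \<le> k"
  using strict_mono_on_less_eq[OF mono] by blast
lemma a_eq_iff: "p \<in> {1..n+2} \<Longrightarrow> k \<in> {1..n+2} \<Longrightarrow> a p = a k \<longleftrightarrow> p = k"
  using strict_mono_on_eqD[OF mono] by blast

lemma hole_lt: "a h < a (h+1)"
  using hh by (subst a_less_iff) auto

lemma hole_sub: "{a h<..<a (h+1)} \<subseteq> {c..d}"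
  using cover by blast

lemma c_lt_d: "c < d"
proof -
  let ?x = "(2*a h + a (h+1))/3" and ?y = "(a h + 2*a (h+1))/3"
  have "?x \<in> {a h<..<a (h+1)}" "?y \<in> {a h<..<a (h+1)}" using hole_lt by auto
  then have "?x \<in> {c..d}" "?y \<in> {c..d}" using hole_sub by blast+
  moreover have "?x < ?y" using hole_lt by simp
  ultimately show ?thesis by auto
qed

lemma rho_ne: "i \<in> {1..n} \<Longrightarrow> rho i \<noteq> 0"
  using rho by fastforce

lemma L_eq: "i \<in> {1..n} \<Longrightarrow> L i = {lo i..hi i}"
proof -
  have e: "ifs rho vrho i = (\<lambda>x. rho i * x + vrho i)" by (auto simp: ifs_def)
  show "i \<in> {1..n} \<Longrightarrow> L i = {lo i..hi i}"
    unfolding L_def e lo_def hi_def image_affinity_atLeastAtMost using cd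
    by (auto simp: mult_left_mono mult_left_mono_neg min_def max_def)
qed

lemma lo_hi: "i \<in> {1..n} \<Longrightarrow> lo i < hi i"
proof -
  assume i: "i \<in> {1..n}"
  have "rho i * c < rho i * d \<or> rho i * d < rho i * c"
  proof (cases "rho i > 0")
    case True then show ?thesis using c_lt_d by (simp add: mult_strict_left_mono)
  next
    case False then have "rho i < 0" using rho_ne[OF i] by auto
    then show ?thesis using c_lt_d by (simp add: mult_strict_left_mono_neg)
  qed
  then show ?thesis unfolding lo_def hi_def ifs_def by (auto simp: min_def max_def)
qed

lemma lo_A: "i \<in> {1..n} \<Longrightarrow> lo i \<in> A" and hi_A: "i \<in> {1..n} \<Longrightarrow> hi i \<in> A"
  unfolding A_def aset lo_def hi_def min_def max_def by auto

lemma L_sub: "i \<in> {1..n} \<Longrightarrow> {lo i..hi i} \<subseteq> {c..d}"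
  using cover L_eq unfolding L_def by blast

lemma ah_ge: "c \<le> a h"
proof (rule ccontr)
  assume "\<not> c \<le> a h"
  then have "(a h + min c (a (h+1)))/2 \<in> {a h<..<a (h+1)}" using hole_lt by (auto simp: min_def)
  then have "(a h + min c (a (h+1)))/2 \<in> {c..d}" using hole_sub by blast
  then show False using \<open>\<not> c \<le> a h\<close> by (auto simp: min_def split: if_splits)
qed

lemma ah1_le: "a (h+1) \<le> d"
proof (rule ccontr)
  assume "\<not> a (h+1) \<le> d"
  then have "(a (h+1) + max d (a h))/2 \<in> {a h<..<a (h+1)}" using hole_lt by (auto simp: max_def)
  then have "(a (h+1) + max d (a h))/2 \<in> {c..d}" using hole_sub by blast
  then show False using \<open>\<not> a (h+1) \<le> d\<close> by (auto simp: max_def split: if_splits)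
qed

lemma A_bounds: "x \<in> A \<Longrightarrow> c \<le> x \<and> x \<le> d"
proof -
  assume "x \<in> A"
  then have "x \<in> {a h, a (h+1)} \<or> (\<exists>i\<in>{1..n}. x = lo i \<or> x = hi i)"
    unfolding A_def aset lo_def hi_def min_def max_def by auto
  then show ?thesis
  proof
    assume "x \<in> {a h, a (h+1)}" then show ?thesis using ah_ge ah1_le hole_lt by auto
  next
    assume "\<exists>i\<in>{1..n}. x = lo i \<or> x = hi i"
    then obtain i where "i \<in> {1..n}" "x = lo i \<or> x = hi i" by blast
    then show ?thesis using L_sub[of i] lo_hi[of i] by auto
  qed
qed

lemma a_in_A: "k \<in> {1..n+2} \<Longrightarrow> a k \<in> A" unfolding A_def by auto

lemma A_cases: "x \<in> A \<Longrightarrow> x = a h \<or> x = a (h+1) \<or> (\<exists>i\<in>{1..n}. x = lo i \<or> x = hi i)"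
  unfolding A_def aset lo_def hi_def min_def max_def by auto

lemma a1: "a 1 = c"
proof -
  have "c \<in> {c..d}" using cd by auto
  then have "c \<in> {a h<..<a (h+1)} \<or> (\<exists>i\<in>{1..n}. c \<in> L i)" using cover unfolding L_def by blast
  then obtain i where i: "i \<in> {1..n}" "c \<in> L i" using ah_ge by auto
  then have "lo i \<le> c" using L_eq by auto
  moreover obtain k where "k \<in> {1..n+2}" "lo i = a k" using lo_A[OF i(1)] unfolding A_def by auto
  moreover have "a 1 \<le> a k" using \<open>k \<in> _\<close> by (subst a_le_iff) auto
  moreover have "c \<le> a 1" using A_bounds[OF a_in_A[of 1]] by auto
  ultimately show ?thesis by auto
qed

lemma an: "a (n+2) = d"
proof -
  have "d \<in> {c..d}" using cd by auto
  then have "d \<in> {a h<..<a (h+1)} \<or> (\<exists>i\<in>{1..n}. d \<in> L i)" using cover unfolding L_def by blast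
  then obtain i where i: "i \<in> {1..n}" "d \<in> L i" using ah1_le by auto
  then have "d \<le> hi i" using L_eq by auto
  moreover obtain k where "k \<in> {1..n+2}" "hi i = a k" using hi_A[OF i(1)] unfolding A_def by auto
  moreover have "a k \<le> a (n+2)" using \<open>k \<in> _\<close> by (subst a_le_iff) auto
  moreover have "a (n+2) \<le> d" using A_bounds[OF a_in_A[of "n+2"]] by auto
  ultimately show ?thesis by auto
qed

lemma int_L: "i \<in> {1..n} \<Longrightarrow> interior (L i) = {lo i<..<hi i}"
  using L_eq by simp

lemma disj': "i \<in> {1..n} \<Longrightarrow> j \<in> {1..n} \<Longrightarrow> t \<in> {lo i<..<hi i} \<Longrightarrow> t \<in> {lo j<..<hi j} \<Longrightarrow> i = j"
  using disj int_L unfolding L_def by blast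

lemma hole_disj': "i \<in> {1..n} \<Longrightarrow> t \<in> {a h<..<a (h+1)} \<Longrightarrow> t \<in> {lo i..hi i} \<Longrightarrow> False"
  using holedisj L_eq unfolding L_def by blast

lemma no_inside: "i \<in> {1..n} \<Longrightarrow> x \<in> A \<Longrightarrow> lo i < x \<Longrightarrow> x < hi i \<Longrightarrow> False"
proof -
  assume i: "i \<in> {1..n}" and x: "x \<in> A" "lo i < x" "x < hi i"
  from A_cases[OF x(1)] show False
  proof (elim disjE)
    assume "x = a h"
    then obtain t where "x < t" "t < a (h+1)" "t < hi i" using btw_r[of x "a (h+1)" "hi i"] hole_lt x by auto
    then show False using hole_disj'[OF i, of t] x \<open>x = a h\<close> by auto
  next
    assume "x = a (h+1)"
    then obtain t where "a h < t" "lo i < t" "t < x" using btw_l[of "a h" x "lo i"] hole_lt x by auto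
    then show False using hole_disj'[OF i, of t] x \<open>x = a (h+1)\<close> by auto
  next
    assume "\<exists>j\<in>{1..n}. x = lo j \<or> x = hi j"
    then obtain j where j: "j \<in> {1..n}" "x = lo j \<or> x = hi j" by blast
    have "i \<noteq> j" using j x by auto
    from j(2) show False
    proof
      assume "x = lo j"
      then obtain t where "x < t" "t < hi j" "t < hi i" using btw_r[of x "hi j" "hi i"] lo_hi[OF j(1)] x by auto
      then show False using disj'[OF i j(1), of t] x \<open>x = lo j\<close> \<open>i \<noteq> j\<close> by auto
    next
      assume "x = hi j"
      then obtain t where "lo j < t" "lo i < t" "t < x" using btw_l[of "lo j" x "lo i"] lo_hi[OF j(1)] x by auto
      then show False using disj'[OF i j(1), of t] x \<open>x = hi j\<close> \<open>i \<noteq> j\<close> by auto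
    qed
  qed
qed

lemma lap_exists: "j \<le> n \<Longrightarrow> j + 1 \<noteq> h \<Longrightarrow> \<exists>l\<in>{1..n}. lo l = a (j+1) \<and> hi l = a (j+2)"
proof -
  assume j: "j \<le> n" "j + 1 \<noteq> h"
  have lt: "a (j+1) < a (j+2)" using j by (subst a_less_iff) auto
  define m where "m = (a (j+1) + a (j+2))/2"
  have m: "a (j+1) < m" "m < a (j+2)" using lt by (auto simp: m_def)
  have "m \<in> {c..d}" using A_bounds[OF a_in_A[of "j+1"]] A_bounds[OF a_in_A[of "j+2"]] j m by auto
  moreover have "m \<notin> {a h<..<a (h+1)}"
  proof
    assume mh: "m \<in> {a h<..<a (h+1)}"
    show False
    proof (cases "h < j + 1")
      case True
      then have "a (h+1) \<le> a (j+1)" using hh j by (subst a_le_iff) auto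
      then show False using mh m by auto
    next
      case False
      then have "a (j+2) \<le> a h" using hh j by (subst a_le_iff) auto
      then show False using mh m by auto
    qed
  qed
  ultimately obtain l where l: "l \<in> {1..n}" "m \<in> {lo l..hi l}" using cover L_eq unfolding L_def by blast
  obtain p where p: "p \<in> {1..n+2}" "lo l = a p" using lo_A[OF l(1)] unfolding A_def by auto
  obtain q where q: "q \<in> {1..n+2}" "hi l = a q" using hi_A[OF l(1)] unfolding A_def by auto
  have "lo l \<le> a (j+1)"
  proof (rule ccontr)
    assume "\<not> lo l \<le> a (j+1)"
    then have "a (j+1) < a p" using p by auto
    then have "j + 1 < p" using p j a_less_iff[of "j+1" p] by auto
    then have "a (j+2) \<le> a p" using p j by (subst a_le_iff) auto
    then show False using p l m by auto
  qed
  moreover have "\<not> lo l < a (j+1)"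
    using no_inside[OF l(1) a_in_A[of "j+1"]] l m j by auto
  moreover have "a (j+2) \<le> hi l"
  proof (rule ccontr)
    assume "\<not> a (j+2) \<le> hi l"
    then have "a q < a (j+2)" using q by auto
    then have "q < j + 2" using q j a_less_iff[of q "j+2"] by auto
    then have "a q \<le> a (j+1)" using q j by (subst a_le_iff) auto
    then show False using q l m by auto
  qed
  moreover have "\<not> a (j+2) < hi l"
    using no_inside[OF l(1) a_in_A[of "j+2"]] l m j by auto
  ultimately show ?thesis using l by force
qed

lemma lap_unique_right: "l \<in> {1..n} \<Longrightarrow> i \<in> {1..n} \<Longrightarrow> e > 0 \<Longrightarrow> {x..x+e} \<subseteq> L i \<Longrightarrow> lo l = x \<Longrightarrow> i = l"
proof -
  assume as: "l \<in> {1..n}" "i \<in> {1..n}" "e > 0" "{x..x+e} \<subseteq> L i" "lo l = x"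
  obtain t where t: "x < t" "t < x + e" "t < hi l" using btw_r[of x "x+e" "hi l"] as lo_hi[OF as(1)] by auto
  have "lo i \<le> x" "x + e \<le> hi i" using as(3,4) L_eq[OF as(2)] by auto
  then show ?thesis using disj'[OF as(2) as(1), of t] t as by auto
qed

lemma lap_unique_left: "l \<in> {1..n} \<Longrightarrow> i \<in> {1..n} \<Longrightarrow> e > 0 \<Longrightarrow> {x-e..x} \<subseteq> L i \<Longrightarrow> hi l = x \<Longrightarrow> i = l"
proof -
  assume as: "l \<in> {1..n}" "i \<in> {1..n}" "e > 0" "{x-e..x} \<subseteq> L i" "hi l = x"
  obtain t where t: "x - e < t" "lo l < t" "t < x" using btw_l[of "x-e" x "lo l"] as lo_hi[OF as(1)] by auto
  have "lo i \<le> x - e" "x \<le> hi i" using as(3,4) L_eq[OF as(2)] by auto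
  then show ?thesis using disj'[OF as(2) as(1), of t] t as by auto
qed

lemma hole_right: "i \<in> {1..n} \<Longrightarrow> e > 0 \<Longrightarrow> {a h..a h+e} \<subseteq> L i \<Longrightarrow> False"
proof -
  assume as: "i \<in> {1..n}" "e > 0" "{a h..a h+e} \<subseteq> L i"
  obtain t where t: "a h < t" "t < a h + e" "t < a (h+1)" using btw_r[of "a h" "a h + e" "a (h+1)"] as hole_lt by auto
  have "t \<in> L i" using t by (intro subsetD[OF as(3)]) auto
  then show False using hole_disj'[OF as(1), of t] L_eq[OF as(1)] t by auto
qed

lemma hole_left: "i \<in> {1..n} \<Longrightarrow> e > 0 \<Longrightarrow> {a (h+1)-e..a (h+1)} \<subseteq> L i \<Longrightarrow> False"
proof -
  assume as: "i \<in> {1..n}" "e > 0" "{a (h+1)-e..a (h+1)} \<subseteq> L i"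
  obtain t where t: "a (h+1) - e < t" "a h < t" "t < a (h+1)" using btw_l[of "a (h+1) - e" "a (h+1)" "a h"] as hole_lt by auto
  have "t \<in> L i" using t by (intro subsetD[OF as(3)]) auto
  then show False using hole_disj'[OF as(1), of t] L_eq[OF as(1)] t by auto
qed

end



lemma sorted_wrt_unique:
  assumes "sorted_wrt R xs" "sorted_wrt R ys" "set xs = set ys"
    and asym: "\<And>x y. R x y \<Longrightarrow> \<not> R y x"
  shows "xs = ys"
  using assms(1-3)
proof (induction xs arbitrary: ys)
  case Nil then show ?case by simp
next
  case (Cons x xs)
  then obtain y ys' where ys: "ys = y # ys'" by (cases ys) auto
  have irr: "\<And>z. \<not> R z z" using asym by blast
  have xy: "x = y"
  proof (rule ccontr)
    assume "x \<noteq> y"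
    then have "y \<in> set xs" "x \<in> set ys'" using Cons.prems ys by auto
    then have "R x y" "R y x" using Cons.prems ys by auto
    then show False using asym by blast
  qed
  have "x \<notin> set xs" using Cons.prems irr by auto
  moreover have "y \<notin> set ys'" using Cons.prems ys irr by auto
  ultimately have "set xs = set ys'" using Cons.prems ys xy by auto
  then have "xs = ys'" using Cons ys by auto
  then show ?case using xy ys by simp
qed

context S begin

definition "yv r = (a ((r+1) div 2 + 1), if even r then (1::int) else -1)"
definition "lp j = (SOME l. l \<in> {1..n} \<and> lo l = a (j+1) \<and> hi l = a (j+2))"
definition "dest k = (if (0 < rho (lp (k div 2))) = even k then 0 else 2*n+1)"

lemma lp: "j \<le> n \<Longrightarrow> j + 1 \<noteq> h \<Longrightarrow> lp j \<in> {1..n} \<and> lo (lp j) = a (j+1) \<and> hi (lp j) = a (j+2)"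
  unfolding lp_def using lap_exists[of j] by - (rule someI_ex, blast)

lemma nrm1: "nrm a n (a 1, s) = (a 1, 1)"
proof -
  have "a 1 \<noteq> a k" if "k \<in> {2..n+1}" for k using a_eq_iff[of 1 k] that by auto
  then have "a 1 \<notin> a ` {2..n+1}" by blast
  then show ?thesis unfolding nrm_def by auto
qed

lemma nrmN: "nrm a n (a (n+2), s) = (a (n+2), -1)"
proof -
  have "a (n+2) \<noteq> a k" if "k \<in> {2..n+1}" for k using a_eq_iff[of "n+2" k] that by auto
  then have "a (n+2) \<notin> a ` {2..n+1}" by blast
  moreover have "a (n+2) \<noteq> a 1" using a_eq_iff[of "n+2" 1] by auto
  ultimately show ?thesis unfolding nrm_def by auto
qed

lemma nrm1': "nrm a n (a (Suc 0), s) = (a (Suc 0), 1)" using nrm1 by simp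
lemma nrmN': "nrm a n (a (Suc (Suc n)), s) = (a (Suc (Suc n)), -1)" using nrmN by simp

lemma nrmk: "k \<in> {2..n+1} \<Longrightarrow> nrm a n (a k, s) = (a k, s)"
  unfolding nrm_def by auto

lemma yv_even: "yv (2*j) = (a (j+1), 1)" unfolding yv_def by simp
lemma yv_odd: "yv (2*j+1) = (a (j+2), -1)" unfolding yv_def by simp
lemma yv0: "yv 0 = (a 1, 1)" unfolding yv_def by simp
lemma yvN: "yv (2*n+1) = (a (n+2), -1)" unfolding yv_def by simp
lemma yvN': "yv (Suc (2*n)) = (a (Suc (Suc n)), -1)" unfolding yv_def by simp

lemma yv_inj: "r < 2*n+2 \<Longrightarrow> r' < 2*n+2 \<Longrightarrow> yv r = yv r' \<Longrightarrow> r = r'"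
proof -
  assume r: "r < 2*n+2" "r' < 2*n+2" "yv r = yv r'"
  then have "a ((r+1) div 2 + 1) = a ((r'+1) div 2 + 1)" unfolding yv_def by simp
  then have "(r+1) div 2 + 1 = (r'+1) div 2 + 1" using r by (subst (asm) a_eq_iff) auto
  moreover have "even r = even r'" using r(3) unfolding yv_def by (auto split: if_splits)
  ultimately show "r = r'" by presburger
qed

lemma onlap_r: "onlap rho vrho c d i (x, 1) \<longleftrightarrow> x \<in> L i \<and> (\<exists>e>0. {x..x+e} \<subseteq> L i)"
  unfolding onlap_def L_def by auto
lemma onlap_l: "onlap rho vrho c d i (x, -1) \<longleftrightarrow> x \<in> L i \<and> (\<exists>e>0. {x-e..x} \<subseteq> L i)"
  unfolding onlap_def L_def by auto

lemma finv_lo: "l \<in> {1..n} \<Longrightarrow> finv rho vrho l (lo l) = (if 0 < rho l then c else d)"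
proof -
  assume l: "l \<in> {1..n}"
  show ?thesis
  proof (cases "0 < rho l")
    case True
    then have "rho l * c < rho l * d" using c_lt_d by (simp add: mult_strict_left_mono)
    then show ?thesis using True unfolding finv_def lo_def ifs_def by (auto simp: min_def)
  next
    case False
    then have "rho l < 0" using rho_ne[OF l] by auto
    then have "rho l * d < rho l * c" using c_lt_d by (simp add: mult_strict_left_mono_neg)
    then show ?thesis using False \<open>rho l < 0\<close> unfolding finv_def lo_def ifs_def by (auto simp: min_def)
  qed
qed

lemma finv_hi: "l \<in> {1..n} \<Longrightarrow> finv rho vrho l (hi l) = (if 0 < rho l then d else c)"
proof -
  assume l: "l \<in> {1..n}"
  show ?thesis
  proof (cases "0 < rho l")
    case True
    then have "rho l * c < rho l * d" using c_lt_d by (simp add: mult_strict_left_mono)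
    then show ?thesis using True unfolding finv_def hi_def ifs_def by (auto simp: max_def)
  next
    case False
    then have "rho l < 0" using rho_ne[OF l] by auto
    then have "rho l * d < rho l * c" using c_lt_d by (simp add: mult_strict_left_mono_neg)
    then show ?thesis using False \<open>rho l < 0\<close> unfolding finv_def hi_def ifs_def by (auto simp: max_def)
  qed
qed

lemma F_lo:
  assumes j: "j \<le> n" "j + 1 \<noteq> h"
  shows "lapidx rho vrho c d n (a (j+1), 1) = lp j \<and>
    Fpt rho vrho c d a n (a (j+1), 1) = Some (if 0 < rho (lp j) then (a 1, 1) else (a (n+2), -1))"
proof -
  let ?l = "lp j"
  have l: "?l \<in> {1..n}" "lo ?l = a (j+1)" "hi ?l = a (j+2)" using lp[OF j] by auto
  have ol: "onlap rho vrho c d ?l (a (j+1), 1)"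
    unfolding onlap_r using L_eq[OF l(1)] lo_hi[OF l(1)] l
    by (auto intro!: exI[of _ "hi ?l - lo ?l"])
  have uq: "i = ?l" if "i \<in> {1..n}" "onlap rho vrho c d i (a (j+1), 1)" for i
    using that lap_unique_right[OF l(1) that(1)] l(2) unfolding onlap_r by blast
  have li: "lapidx rho vrho c d n (a (j+1), 1) = ?l"
    unfolding lapidx_def
  proof (rule some_equality)
    show "?l \<in> {1..n} \<and> onlap rho vrho c d ?l (a (j+1), 1)" using ol l(1) by (rule conjI[rotated])
  next
    fix i assume "i \<in> {1..n} \<and> onlap rho vrho c d i (a (j+1), 1)"
    then show "i = ?l" using uq by blast
  qed
  have "finv rho vrho ?l (a (j+1)) = (if 0 < rho ?l then a 1 else a (n+2))"
    using finv_lo[OF l(1)] l a1 an by simp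
  moreover have "\<exists>i\<in>{1..n}. onlap rho vrho c d i (a (j+1), 1)" using ol l(1) by blast
  ultimately show ?thesis using li unfolding Fpt_def Let_def
    by (cases "0 < rho ?l") (simp_all add: nrm1' nrmN')
qed

lemma F_hi:
  assumes j: "j \<le> n" "j + 1 \<noteq> h"
  shows "lapidx rho vrho c d n (a (j+2), -1) = lp j \<and>
    Fpt rho vrho c d a n (a (j+2), -1) = Some (if 0 < rho (lp j) then (a (n+2), -1) else (a 1, 1))"
proof -
  let ?l = "lp j"
  have l: "?l \<in> {1..n}" "lo ?l = a (j+1)" "hi ?l = a (j+2)" using lp[OF j] by auto
  have ol: "onlap rho vrho c d ?l (a (j+2), -1)"
    unfolding onlap_l using L_eq[OF l(1)] lo_hi[OF l(1)] l
    by (auto intro!: exI[of _ "hi ?l - lo ?l"])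
  have uq: "i = ?l" if "i \<in> {1..n}" "onlap rho vrho c d i (a (j+2), -1)" for i
    using that lap_unique_left[OF l(1) that(1)] l(3) unfolding onlap_l by blast
  have li: "lapidx rho vrho c d n (a (j+2), -1) = ?l"
    unfolding lapidx_def
  proof (rule some_equality)
    show "?l \<in> {1..n} \<and> onlap rho vrho c d ?l (a (j+2), -1)" using ol l(1) by (rule conjI[rotated])
  next
    fix i assume "i \<in> {1..n} \<and> onlap rho vrho c d i (a (j+2), -1)"
    then show "i = ?l" using uq by blast
  qed
  have "finv rho vrho ?l (a (j+2)) = (if 0 < rho ?l then a (n+2) else a 1)"
    using finv_hi[OF l(1)] l a1 an by simp
  moreover have "\<exists>i\<in>{1..n}. onlap rho vrho c d i (a (j+2), -1)" using ol l(1) by blast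
  ultimately show ?thesis using li unfolding Fpt_def Let_def
    by (cases "0 < rho ?l") (simp_all add: nrm1' nrmN')
qed

lemma F_hole_lo: "Fpt rho vrho c d a n (a h, 1) = None"
proof -
  have "\<not> (\<exists>i\<in>{1..n}. onlap rho vrho c d i (a h, 1))"
  proof
    assume "\<exists>i\<in>{1..n}. onlap rho vrho c d i (a h, 1)"
    then obtain i e where "i \<in> {1..n}" "e > 0" "{a h..a h+e} \<subseteq> L i" unfolding onlap_r by blast
    then show False using hole_right by blast
  qed
  then show ?thesis unfolding Fpt_def by (simp only: if_False)
qed

lemma F_hole_hi: "Fpt rho vrho c d a n (a (h+1), -1) = None"
proof -
  have "\<not> (\<exists>i\<in>{1..n}. onlap rho vrho c d i (a (h+1), -1))"
  proof
    assume "\<exists>i\<in>{1..n}. onlap rho vrho c d i (a (h+1), -1)"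
    then obtain i e where "i \<in> {1..n}" "e > 0" "{a (h+1)-e..a (h+1)} \<subseteq> L i" unfolding onlap_l by blast
    then show False using hole_left by blast
  qed
  then show ?thesis unfolding Fpt_def by (simp only: if_False)
qed

lemma FY:
  assumes k: "k < 2*n+2"
  shows "Fpt rho vrho c d a n (yv k) = (if k div 2 + 1 = h then None else Some (yv (dest k)))
    \<and> (k div 2 + 1 \<noteq> h \<longrightarrow> lapidx rho vrho c d n (yv k) = lp (k div 2))"
proof -
  define j where "j = k div 2"
  have j: "k = 2*j \<or> k = 2*j+1" "j \<le> n" "k div 2 = j" using k unfolding j_def by presburger+
  from j(1) show ?thesis
  proof
    assume kj: "k = 2*j"
    show ?thesis
    proof (cases "j + 1 = h")
      case True
      then have "yv k = (a h, 1)" using kj yv_even[of j] by simp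
      then show ?thesis using kj True F_hole_lo by simp
    next
      case False
      have yk: "yv k = (a (j+1), 1)" using kj yv_even[of j] by simp
      have dk: "dest k = (if 0 < rho (lp j) then 0 else 2*n+1)" using kj j(3) unfolding dest_def by simp
      note F = F_lo[OF j(2) False]
      have A: "Fpt rho vrho c d a n (yv k) = Some (yv (dest k))"
      proof (cases "0 < rho (lp j)")
        case True
        then have "Fpt rho vrho c d a n (a (j+1), 1) = Some (a 1, 1)" using F by simp
        then show ?thesis using yk dk True yv0 by simp
      next
        case False
        then have "Fpt rho vrho c d a n (a (j+1), 1) = Some (a (n+2), -1)" using F by simp
        then show ?thesis using yk dk False yvN by simp
      qed
      have B: "lapidx rho vrho c d n (yv k) = lp j" using F yk by simp
      show ?thesis using A B False j(3) by simp
    qed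
  next
    assume kj: "k = 2*j+1"
    show ?thesis
    proof (cases "j + 1 = h")
      case True
      then have "yv k = (a (h+1), -1)" using kj yv_odd[of j] by simp
      then show ?thesis using kj True F_hole_hi by simp
    next
      case False
      have yk: "yv k = (a (j+2), -1)" using kj yv_odd[of j] by simp
      have dk: "dest k = (if 0 < rho (lp j) then 2*n+1 else 0)" using kj j(3) unfolding dest_def by simp
      note F = F_hi[OF j(2) False]
      have A: "Fpt rho vrho c d a n (yv k) = Some (yv (dest k))"
      proof (cases "0 < rho (lp j)")
        case True
        then have "Fpt rho vrho c d a n (a (j+2), -1) = Some (a (n+2), -1)" using F by simp
        then show ?thesis using yk dk True yvN by simp
      next
        case False
        then have "Fpt rho vrho c d a n (a (j+2), -1) = Some (a 1, 1)" using F by simp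
        then show ?thesis using yk dk False yv0 by simp
      qed
      have B: "lapidx rho vrho c d n (yv k) = lp j" using F yk by simp
      show ?thesis using A B False j(3) by simp
    qed
  qed
qed

end


context S begin

abbreviation "E \<equiv> yv ` {..<2*n+2}"

lemma dest_lt: "dest k < 2*n+2" unfolding dest_def by auto

lemma endpts_eq: "endpts a n = E"
proof
  show "endpts a n \<subseteq> E"
  proof
    fix p assume "p \<in> endpts a n"
    then consider "p = (a 1, 1)" | "p = (a (n+2), -1)" | k s where "k \<in> {2..n+1}" "s \<in> {-1,1}" "p = (a k, s)"
      unfolding endpts_def by blast
    then show "p \<in> E"
    proof cases
      case 1 then show ?thesis using yv0 by (auto intro!: image_eqI[of _ _ 0])
    next
      case 2 then show ?thesis using yvN by (auto intro!: image_eqI[of _ _ "2*n+1"])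
    next
      case (3 k s)
      show ?thesis
      proof (cases "s = 1")
        case True
        have kk: "k - 1 + 1 = k" using 3(1) by auto
        have "yv (2*(k-1)) = (a k, 1)" using yv_even[of "k-1"] unfolding kk .
        moreover have "2*(k-1) < 2*n+2" using 3(1) by auto
        ultimately show ?thesis using 3 True by (auto intro!: image_eqI[of _ _ "2*(k-1)"])
      next
        case False
        then have s: "s = -1" using 3(2) by auto
        have kk: "k - 2 + 2 = k" using 3(1) by auto
        have "yv (2*(k-2)+1) = (a k, -1)" using yv_odd[of "k-2"] unfolding kk .
        moreover have "2*(k-2)+1 < 2*n+2" using 3(1) by auto
        ultimately show ?thesis using 3 s by (auto intro!: image_eqI[of _ _ "2*(k-2)+1"])
      qed
    qed
  qed
next
  show "E \<subseteq> endpts a n"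
  proof
    fix p assume "p \<in> E"
    then obtain r where r: "r < 2*n+2" "p = yv r" by auto
    define j where "j = r div 2"
    have j: "r = 2*j \<or> r = 2*j+1" "j \<le> n" using r unfolding j_def by presburger+
    from j(1) show "p \<in> endpts a n"
    proof
      assume rj: "r = 2*j"
      then have p: "p = (a (j+1), 1)" using r yv_even by simp
      show ?thesis
      proof (cases "j = 0")
        case True then show ?thesis using p unfolding endpts_def by simp
      next
        case False then have "j+1 \<in> {2..n+1}" using j by auto
        then show ?thesis using p unfolding endpts_def by blast
      qed
    next
      assume rj: "r = 2*j+1"
      then have p: "p = (a (j+2), -1)" using r yv_odd by simp
      show ?thesis
      proof (cases "j = n")
        case True then show ?thesis using p unfolding endpts_def by simp
      next
        case False then have "j+2 \<in> {2..n+1}" using j by auto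
        then show ?thesis using p unfolding endpts_def by blast
      qed
    qed
  qed
qed

lemma F_closed: "p \<in> E \<Longrightarrow> Fpt rho vrho c d a n p = None \<or> (\<exists>q\<in>E. Fpt rho vrho c d a n p = Some q)"
proof -
  assume "p \<in> E"
  then obtain k where k: "k < 2*n+2" "p = yv k" by auto
  have F: "Fpt rho vrho c d a n (yv k) = (if k div 2 + 1 = h then None else Some (yv (dest k)))"
    using FY[OF k(1)] by (rule conjunct1)
  show ?thesis
  proof (cases "k div 2 + 1 = h")
    case True then show ?thesis using F k(2) by simp
  next
    case False
    have "yv (dest k) \<in> E" using dest_lt by blast
    then show ?thesis using F False k(2) by auto
  qed
qed

lemma iter_closed:
  assumes p: "p \<in> E"
  shows "((\<lambda>z. Option.bind z (Fpt rho vrho c d a n)) ^^ k) (Some p) \<in> insert None (Some ` E)"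
proof (induction k)
  case 0 show ?case using p by simp
next
  case (Suc k)
  define X where "X = ((\<lambda>z. Option.bind z (Fpt rho vrho c d a n)) ^^ k) (Some p)"
  have X: "X \<in> insert None (Some ` E)" using Suc unfolding X_def .
  have eq: "((\<lambda>z. Option.bind z (Fpt rho vrho c d a n)) ^^ Suc k) (Some p) = Option.bind X (Fpt rho vrho c d a n)"
    unfolding X_def by simp
  show ?case
  proof (cases X)
    case None then show ?thesis unfolding eq by simp
  next
    case (Some q)
    then have "q \<in> E" using X by auto
    from F_closed[OF this] show ?thesis unfolding eq Some by auto
  qed
qed

lemma orbit_sub: "p \<in> E \<Longrightarrow> orbit rho vrho c d a n p \<subseteq> E"
proof
  fix p' assume p: "p \<in> E" and "p' \<in> orbit rho vrho c d a n p"
  then obtain k where "((\<lambda>z. Option.bind z (Fpt rho vrho c d a n)) ^^ k) (Some p) = Some p'"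
    unfolding orbit_def by blast
  then have "Some p' \<in> insert None (Some ` E)" using iter_closed[OF p, of k] by metis
  then show "p' \<in> E" by auto
qed

lemma orbit_self: "p \<in> orbit rho vrho c d a n p"
  unfolding orbit_def by (auto intro!: exI[of _ 0])

lemma Yset_eq: "Yset rho vrho c d a n = E"
  unfolding Yset_def endpts_eq using orbit_sub orbit_self by blast

lemma ptless_asym: "ptless x y \<Longrightarrow> \<not> ptless y x"
  unfolding ptless_def by auto

lemma sorted_yv: "sorted_wrt ptless (map yv [0..<2*n+2])"
proof -
  have "ptless (yv i) (yv j)" if "i < j" "j < 2*n+2" for i j
  proof -
    have le: "(i+1) div 2 \<le> (j+1) div 2" using that by (simp add: div_le_mono)
    show ?thesis
    proof (cases "(i+1) div 2 = (j+1) div 2")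
      case True
      then have "odd i" "even j" using that by presburger+
      then show ?thesis using True unfolding ptless_def yv_def by simp
    next
      case False
      then have "(i+1) div 2 + 1 < (j+1) div 2 + 1" using le by simp
      moreover have "(i+1) div 2 + 1 \<in> {1..n+2}" "(j+1) div 2 + 1 \<in> {1..n+2}" using that by auto
      ultimately have "a ((i+1) div 2 + 1) < a ((j+1) div 2 + 1)"
        using a_less_iff[of "(i+1) div 2 + 1" "(j+1) div 2 + 1"] by blast
      then show ?thesis unfolding ptless_def yv_def by simp
    qed
  qed
  then show ?thesis unfolding sorted_wrt_iff_nth_less by (simp del: upt_Suc)
qed

lemma set_yv: "set (map yv [0..<2*n+2]) = E"
  by (simp only: set_map set_upt atLeast0LessThan)

lemma ylist_eq: "ylist rho vrho c d a n = map yv [0..<2*n+2]"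
  unfolding ylist_def Yset_eq
proof (rule the_equality)
  show "set (map yv [0..<2*n+2]) = E \<and> sorted_wrt ptless (map yv [0..<2*n+2])"
    using set_yv sorted_yv by blast
next
  fix ys assume H: "set ys = E \<and> sorted_wrt ptless ys"
  show "ys = map yv [0..<2*n+2]"
  proof (rule sorted_wrt_unique[of ptless])
    show "sorted_wrt ptless ys" "set ys = set (map yv [0..<2*n+2])" using H set_yv by auto
    show "sorted_wrt ptless (map yv [0..<2*n+2])" by (rule sorted_yv)
    show "\<And>x y. ptless x y \<Longrightarrow> \<not> ptless y x" by (rule ptless_asym)
  qed
qed

lemma fstE: "fst ` E \<subseteq> A"
proof
  fix x assume "x \<in> fst ` E"
  then obtain r where r: "r < 2*n+2" "x = fst (yv r)" by auto
  then have "(r+1) div 2 + 1 \<in> {1..n+2}" by auto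
  then show "x \<in> A" using r unfolding yv_def A_def by auto
qed

lemma sorted_a: "sorted_wrt (<) (map a [1..<n+3])"
proof -
  have "a (i+1) < a (j+1)" if "i < j" "j < n+2" for i j
    using a_less_iff[of "i+1" "j+1"] that by auto
  then show ?thesis unfolding sorted_wrt_iff_nth_less by simp
qed

lemma plist_eq: "plist rho vrho c d a n = map a [1..<n+3]"
proof -
  have "fst ` Yset rho vrho c d a n \<union> a ` {1..n+2} = A" using fstE Yset_eq unfolding A_def by auto
  moreover have "set (map a [1..<n+3]) = A" unfolding A_def by auto
  moreover have "finite A" unfolding A_def by auto
  moreover have "set (sorted_list_of_set A) = A" using \<open>finite A\<close> by simp
  ultimately have "sorted_list_of_set A = map a [1..<n+3]"
    using strict_sorted_equal[OF sorted_a strict_sorted_list_of_set, of A] by simp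
  then show ?thesis unfolding plist_def using \<open>fst ` _ \<union> _ = A\<close> by simp
qed

end



definition Vf :: "nat \<Rightarrow> nat \<Rightarrow> nat \<Rightarrow> nat \<Rightarrow> int" where
 "Vf N i k r = (let P = (\<lambda>r. odd r \<and> r < N) in
   if r = i then 1 else if k < i then
     (if k \<le> r \<and> r < i \<and> P r then 1
      else if 0 < r \<and> k \<le> r - 1 \<and> r - 1 < i \<and> P (r - 1) then -1 else 0)
   else if i < k then
     (if i < r \<and> r \<le> k \<and> P (r - 1) then 1
      else if i < r + 1 \<and> r + 1 \<le> k \<and> P r then -1 else 0)
   else 0)"
lemma oddE1: "odd (2*t::nat) = False" by simp
lemma oddE2: "odd (2*t - 1::nat) = (0 < t)" by (cases t) simp_all
lemma oddO1: "odd (2*t + 1::nat) = True" by simp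
lemma oddO2: "odd (2*t + 1 - 1::nat) = False" by simp

lemma VN_even: "t \<le> n \<Longrightarrow> j \<le> n \<Longrightarrow> Vf (2*n+1) (2*n+1) (2*j+1) (2*t) = (if j < t then -1 else 0)"
  unfolding Vf_def Let_def oddE1 oddE2 by auto
lemma VN_odd: "t \<le> n \<Longrightarrow> j \<le> n \<Longrightarrow> Vf (2*n+1) (2*n+1) (2*j+1) (2*t+1) = (if j \<le> t then 1 else 0)"
  unfolding Vf_def Let_def oddO1 oddO2 by auto
lemma V0_even: "t \<le> n \<Longrightarrow> j \<le> n \<Longrightarrow> Vf (2*n+1) 0 (2*j) (2*t) = (if t \<le> j then 1 else 0)"
  unfolding Vf_def Let_def oddE1 oddE2 by auto
lemma V0_odd: "t \<le> n \<Longrightarrow> j \<le> n \<Longrightarrow> Vf (2*n+1) 0 (2*j) (2*t+1) = (if t < j then -1 else 0)"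
  unfolding Vf_def Let_def oddO1 oddO2 by auto
lemma W0_even: "t \<le> n \<Longrightarrow> j \<le> n \<Longrightarrow> Vf (2*n+1) 0 (2*j+1) (2*t) = (if t \<le> j then 1 else 0)"
  unfolding Vf_def Let_def oddE1 oddE2 by auto
lemma W0_odd: "t \<le> n \<Longrightarrow> j \<le> n \<Longrightarrow> Vf (2*n+1) 0 (2*j+1) (2*t+1) = (if t < j then -1 else 0)"
  unfolding Vf_def Let_def oddO1 oddO2 by auto
lemma WN_even: "t \<le> n \<Longrightarrow> j \<le> n \<Longrightarrow> Vf (2*n+1) (2*n+1) (2*j) (2*t) = (if j < t then -1 else 0)"
  unfolding Vf_def Let_def oddE1 oddE2 by auto
lemma WN_odd: "t \<le> n \<Longrightarrow> j \<le> n \<Longrightarrow> Vf (2*n+1) (2*n+1) (2*j) (2*t+1) = (if j \<le> t then 1 else 0)"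
  unfolding Vf_def Let_def oddO1 oddO2 by auto

lemma VfA: "r \<le> 2*n+1 \<Longrightarrow> j \<le> n \<Longrightarrow>
  Vf (2*n+1) (2*n+1) (2*j+1) r - Vf (2*n+1) 0 (2*j) r = (if even r then -1 else 1)"
proof -
  assume a: "r \<le> 2*n+1" "j \<le> n"
  define t where "t = r div 2"
  have tn: "t \<le> n" using a(1) unfolding t_def by simp
  show ?thesis
  proof (cases "even r")
    case True
    then have r: "r = 2*t" unfolding t_def by simp
    show ?thesis unfolding r using VN_even[OF tn a(2)] V0_even[OF tn a(2)] by simp
  next
    case False
    then have r: "r = 2*t+1" unfolding t_def by simp
    show ?thesis unfolding r using VN_odd[OF tn a(2)] V0_odd[OF tn a(2)] by simp
  qed
qed

lemma VfB: "r \<le> 2*n+1 \<Longrightarrow> j \<le> n \<Longrightarrow>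
  Vf (2*n+1) 0 (2*j+1) r - Vf (2*n+1) (2*n+1) (2*j) r = (if even r then 1 else -1)"
proof -
  assume a: "r \<le> 2*n+1" "j \<le> n"
  define t where "t = r div 2"
  have tn: "t \<le> n" using a(1) unfolding t_def by simp
  show ?thesis
  proof (cases "even r")
    case True
    then have r: "r = 2*t" unfolding t_def by simp
    show ?thesis unfolding r using W0_even[OF tn a(2)] WN_even[OF tn a(2)] by simp
  next
    case False
    then have r: "r = 2*t+1" unfolding t_def by simp
    show ?thesis unfolding r using W0_odd[OF tn a(2)] WN_odd[OF tn a(2)] by simp
  qed
qed

context S begin

lemma Pnth: "j < n+2 \<Longrightarrow> map a [1..<n+3] ! j = a (j+1)"
  by (simp del: upt_Suc)
lemma Ynth: "r < 2*n+2 \<Longrightarrow> map yv [0..<2*n+2] ! r = yv r"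
  by (simp del: upt_Suc)
lemma lenP: "length (map a [1..<n+3]) = n+2" by simp
lemma lenY: "length (map yv [0..<2*n+2]) = 2*n+2" by simp

lemma nrm_lo: "k < n+1 \<Longrightarrow> nrm a n (a (k+1), 1) = yv (2*k)"
proof (cases "k = 0")
  case True then show ?thesis using nrm1 yv0 by simp
next
  case False
  assume "k < n+1"
  then have "k+1 \<in> {2..n+1}" using False by auto
  then show ?thesis using nrmk yv_even by simp
qed

lemma nrm_hi: "k < n+1 \<Longrightarrow> nrm a n (a (k+2), -1) = yv (2*k+1)"
proof (cases "k = n")
  case True then show ?thesis using nrmN yvN by simp
next
  case False
  assume "k < n+1"
  then have "k+2 \<in> {2..n+1}" using False by auto
  then show ?thesis using nrmk yv_odd by simp
qed

definition "Bv (r::nat) (k::nat) = (if r = 2*k then -1 else if r = 2*k+1 then 1 else (0::real))"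

lemma Bmat_eq: "Bmat rho vrho c d a n = mat (2*n+2) (n+1) (\<lambda>(r,k). Bv r k)"
  unfolding Bmat_def Let_def plist_eq ylist_eq lenP lenY
proof (rule cong_mat)
  fix r k assume r: "r < 2*n+2" and k: "k < n+2-1"
  have kn: "k < n+1" using k by simp
  have P1: "map a [1..<n+3] ! k = a (k+1)" using k by (simp del: upt_Suc)
  have P2: "map a [1..<n+3] ! Suc k = a (k+2)" using k by (simp del: upt_Suc)
  have Y: "map yv [0..<2*n+2] ! r = yv r" using r by (simp del: upt_Suc)
  have n1: "nrm a n (a (k+1), 1) = yv (2*k)" using kn by (rule nrm_lo)
  have n2: "nrm a n (a (k+2), -1) = yv (2*k+1)" using kn by (rule nrm_hi)
  have r1: "2*k < 2*n+2" "2*k+1 < 2*n+2" using kn by simp_all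
  have e1: "(yv r = nrm a n (a (k+1), 1)) = (r = 2*k)" unfolding n1 using yv_inj[OF r r1(1)] by blast
  have e2: "(yv r = nrm a n (a (k+2), -1)) = (r = 2*k+1)" unfolding n2 using yv_inj[OF r r1(2)] by blast
  show "(case (r, k) of (r, j) \<Rightarrow> if map yv [0..<2*n+2] ! r = nrm a n (map a [1..<n+3] ! j, 1) then -1
          else if map yv [0..<2*n+2] ! r = nrm a n (map a [1..<n+3] ! Suc j, -1) then 1 else 0) =
        (case (r, k) of (r, k) \<Rightarrow> Bv r k)"
    unfolding prod.case P1 P2 Y e1 e2 Bv_def by (rule refl)
qed simp_all


lemma ifs_strict: "l \<in> {1..n} \<Longrightarrow> c < t \<Longrightarrow> t < d \<Longrightarrow> lo l < ifs rho vrho l t \<and> ifs rho vrho l t < hi l"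
proof -
  assume l: "l \<in> {1..n}" and t: "c < t" "t < d"
  show ?thesis
  proof (cases "0 < rho l")
    case True
    then have "rho l * c < rho l * t" "rho l * t < rho l * d" using t by (simp_all add: mult_strict_left_mono)
    then show ?thesis unfolding lo_def hi_def ifs_def by (auto simp: min_def max_def)
  next
    case False
    then have "rho l < 0" using rho_ne[OF l] by auto
    then have "rho l * t < rho l * c" "rho l * d < rho l * t" using t by (simp_all add: mult_strict_left_mono_neg)
    then show ?thesis unfolding lo_def hi_def ifs_def by (auto simp: min_def max_def)
  qed
qed

lemma finv_ifs: "l \<in> {1..n} \<Longrightarrow> finv rho vrho l (ifs rho vrho l t) = t"
  using rho_ne unfolding finv_def ifs_def by simp

lemma Fimg_lap: "j \<le> n \<Longrightarrow> j + 1 \<noteq> h \<Longrightarrow> {c<..<d} \<subseteq> Fimg rho vrho c d n {a (j+1)<..<a (j+2)}"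
proof
  fix t assume j: "j \<le> n" "j + 1 \<noteq> h" and t: "t \<in> {c<..<d}"
  let ?l = "lp j"
  have l: "?l \<in> {1..n}" "lo ?l = a (j+1)" "hi ?l = a (j+2)" using lp[OF j] by auto
  let ?s = "ifs rho vrho ?l t"
  have s1: "?s \<in> {a (j+1)<..<a (j+2)}" using ifs_strict[OF l(1)] t l by auto
  have s2: "?s \<in> ifs rho vrho ?l ` {c..d}" using t by auto
  have "t = finv rho vrho ?l ?s" using finv_ifs[OF l(1)] by simp
  then have "t \<in> finv rho vrho ?l ` ({a (j+1)<..<a (j+2)} \<inter> ifs rho vrho ?l ` {c..d})" using s1 s2 by blast
  then show "t \<in> Fimg rho vrho c d n {a (j+1)<..<a (j+2)}" unfolding Fimg_def using l(1) by blast
qed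

lemma Fimg_hole: "Fimg rho vrho c d n {a h<..<a (h+1)} = {}"
  unfolding Fimg_def using holedisj by auto

lemma ivl_sub: "i \<le> n \<Longrightarrow> {a (i+1)<..<a (i+2)} \<subseteq> {c<..<d}"
  using A_bounds[OF a_in_A[of "i+1"]] A_bounds[OF a_in_A[of "i+2"]] by auto

lemma ivl_ne: "i \<le> n \<Longrightarrow> {a (i+1)<..<a (i+2)} \<noteq> {}"
proof -
  assume i: "i \<le> n"
  have "a (i+1) < a (i+2)" using i a_less_iff[of "i+1" "i+2"] by simp
  then show ?thesis by (simp add: dense)
qed

lemma lapJ: "j \<le> n \<Longrightarrow> j + 1 \<noteq> h \<Longrightarrow>
  (SOME i. i \<in> {1..n} \<and> {a (j+1)..a (j+2)} \<subseteq> ifs rho vrho i ` {c..d}) = lp j"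
proof -
  assume j: "j \<le> n" "j + 1 \<noteq> h"
  have l: "lp j \<in> {1..n}" "lo (lp j) = a (j+1)" "hi (lp j) = a (j+2)" using lp[OF j] by auto
  show ?thesis
  proof (rule some_equality)
    show "lp j \<in> {1..n} \<and> {a (j+1)..a (j+2)} \<subseteq> ifs rho vrho (lp j) ` {c..d}"
      using l L_eq[OF l(1)] unfolding L_def by simp
  next
    fix i assume i: "i \<in> {1..n} \<and> {a (j+1)..a (j+2)} \<subseteq> ifs rho vrho i ` {c..d}"
    have lt: "a (j+1) < a (j+2)" using l lo_hi[OF l(1)] by simp
    have "{a (j+1)..a (j+1) + (a (j+2) - a (j+1))} \<subseteq> L i" using i unfolding L_def by simp
    then show "i = lp j" using lap_unique_right[OF l(1), of i "a (j+2) - a (j+1)" "a (j+1)"] i lt l(2) by simp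
  qed
qed

definition "Wt \<beta> j = (if j + 1 = h then 0 else \<bar>1 / rho (lp j)\<bar> powr (-\<beta>))"

lemma Qmat_eq: "Qmat rho vrho c d a n \<beta> = mat (n+1) (n+1) (\<lambda>(i,j). Wt \<beta> j)"
  unfolding Qmat_def Let_def plist_eq lenP
proof (rule cong_mat)
  fix i j assume i: "i < n+2-1" and j: "j < n+2-1"
  have P1: "map a [1..<n+3] ! i = a (i+1)" using i by (simp del: upt_Suc)
  have P2: "map a [1..<n+3] ! Suc i = a (i+2)" using i by (simp del: upt_Suc)
  have P3: "map a [1..<n+3] ! j = a (j+1)" using j by (simp del: upt_Suc)
  have P4: "map a [1..<n+3] ! Suc j = a (j+2)" using j by (simp del: upt_Suc)
  have jn: "j \<le> n" "i \<le> n" using i j by auto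
  show "(case (i, j) of (i, j) \<Rightarrow>
           if {map a [1..<n+3] ! i<..<map a [1..<n+3] ! Suc i}
              \<subseteq> Fimg rho vrho c d n {map a [1..<n+3] ! j<..<map a [1..<n+3] ! Suc j}
           then \<bar>1 / rho ((\<lambda>j. SOME i. i \<in> {1..n} \<and> {map a [1..<n+3] ! j..map a [1..<n+3] ! Suc j}
                   \<subseteq> ifs rho vrho i ` {c..d}) j)\<bar> powr - \<beta>
           else 0) = (case (i, j) of (i, j) \<Rightarrow> Wt \<beta> j)"
    unfolding prod.case P1 P2 P3 P4
  proof (cases "j + 1 = h")
    case True
    have "a (j+2) = a (h+1)" using True by simp
    then have "\<not> {a (i+1)<..<a (i+2)} \<subseteq> Fimg rho vrho c d n {a (j+1)<..<a (j+2)}"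
      using Fimg_hole ivl_ne[OF jn(2)] True by simp
    then show "(if {a (i+1)<..<a (i+2)} \<subseteq> Fimg rho vrho c d n {a (j+1)<..<a (j+2)}
           then \<bar>1 / rho ((\<lambda>j. SOME i. i \<in> {1..n} \<and> {a (j+1)..a (j+2)} \<subseteq> ifs rho vrho i ` {c..d}) j)\<bar> powr - \<beta>
           else 0) = Wt \<beta> j" using True unfolding Wt_def by simp
  next
    case False
    have "{a (i+1)<..<a (i+2)} \<subseteq> Fimg rho vrho c d n {a (j+1)<..<a (j+2)}"
      using ivl_sub[OF jn(2)] Fimg_lap[OF jn(1) False] by blast
    then show "(if {a (i+1)<..<a (i+2)} \<subseteq> Fimg rho vrho c d n {a (j+1)<..<a (j+2)}
           then \<bar>1 / rho ((\<lambda>j. SOME i. i \<in> {1..n} \<and> {a (j+1)..a (j+2)} \<subseteq> ifs rho vrho i ` {c..d}) j)\<bar> powr - \<beta>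
           else 0) = Wt \<beta> j" using False lapJ[OF jn(1) False] unfolding Wt_def by simp
  qed
qed simp_all


lemma pairAt_iff: "pairAt a n (map yv [0..<2*n+2]) r \<longleftrightarrow> odd r \<and> r < 2*n+1"
proof
  assume p: "pairAt a n (map yv [0..<2*n+2]) r"
  then have r: "r < 2*n+1" unfolding pairAt_def by simp
  then have "snd (yv r) = -1" using p unfolding pairAt_def by (simp del: upt_Suc)
  then have "odd r" unfolding yv_def by (auto split: if_splits)
  then show "odd r \<and> r < 2*n+1" using r by simp
next
  assume "odd r \<and> r < 2*n+1"
  then obtain t where t: "r = 2*t+1" "t < n" by (metis oddE Suc_eq_plus1 add_less_cancel_right mult_less_cancel1 zero_less_numeral
     less_Suc_eq_le not_less_eq_eq linorder_not_le mult_Suc_right add_2_eq_Suc')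
  have Y1: "map yv [0..<2*n+2] ! r = (a (t+2), -1)" using t yv_odd[of t] by (simp del: upt_Suc)
  have Y2: "map yv [0..<2*n+2] ! Suc r = (a (t+2), 1)" using t yv_even[of "t+1"] by (simp del: upt_Suc)
  have m: "a (t+2) \<in> a ` {2..n+1}" using t by auto
  show "pairAt a n (map yv [0..<2*n+2]) r" unfolding pairAt_def Y1 Y2 using t m by simp
qed

definition "Vv \<beta> r k = (if k div 2 + 1 = h then 0 else
   sgn (rho (lp (k div 2))) * \<bar>1 / rho (lp (k div 2))\<bar> powr (-\<beta>) * real_of_int (Vf (2*n+1) (dest k) k r))"

lemma Vf_real: "e * real_of_int (Vf N i k r) =
  (if r = i then e
   else if k < i then
     (if k \<le> r \<and> r < i \<and> (odd r \<and> r < N) then e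
      else if 0 < r \<and> k \<le> r - 1 \<and> r - 1 < i \<and> (odd (r-1) \<and> r - 1 < N) then -e else 0)
   else if i < k then
     (if i < r \<and> r \<le> k \<and> (odd (r-1) \<and> r - 1 < N) then e
      else if i < r + 1 \<and> r + 1 \<le> k \<and> (odd r \<and> r < N) then -e else 0)
   else 0)"
  unfolding Vf_def Let_def by simp

lemma Vmat_eq: "Vmat rho vrho c d a n \<beta> = mat (2*n+2) (2*n+2) (\<lambda>(r,k). Vv \<beta> r k)"
  unfolding Vmat_def ylist_eq
  apply (subst Let_def, subst Let_def)
  unfolding lenY
proof (rule cong_mat)
  fix r k assume r: "r < 2*n+2" and k: "k < 2*n+2"
  have Yk: "map yv [0..<2*n+2] ! k = yv k" using k by (simp del: upt_Suc)
  have Yi: "\<And>i. i < 2*n+2 \<Longrightarrow> map yv [0..<2*n+2] ! i = yv i" by (simp del: upt_Suc)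
  have ex: "(\<exists>i<2*n+2. Fpt rho vrho c d a n (yv k) = Some (map yv [0..<2*n+2] ! i)) \<longleftrightarrow>
            (\<exists>i<2*n+2. Fpt rho vrho c d a n (yv k) = Some (yv i))" using Yi by auto
  note F = FY[OF k]
  show "(case (r, k) of (r, j) \<Rightarrow>
          if \<exists>i<2*n+2. Fpt rho vrho c d a n (map yv [0..<2*n+2] ! j) = Some (map yv [0..<2*n+2] ! i)
          then let i = THE i. i < 2*n+2 \<and> Fpt rho vrho c d a n (map yv [0..<2*n+2] ! j) = Some (map yv [0..<2*n+2] ! i);
                   l = lapidx rho vrho c d n (map yv [0..<2*n+2] ! j);
                   e = sgn (rho l) * \<bar>1 / rho l\<bar> powr - \<beta>
               in if r = i then e
                  else if j < i
                       then if j \<le> r \<and> r < i \<and> pairAt a n (map yv [0..<2*n+2]) r then e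
                            else if 0 < r \<and> j \<le> r - 1 \<and> r - 1 < i \<and> pairAt a n (map yv [0..<2*n+2]) (r - 1) then - e else 0
                       else if i < j
                            then if i < r \<and> r \<le> j \<and> pairAt a n (map yv [0..<2*n+2]) (r - 1) then e
                                 else if i < r + 1 \<and> r + 1 \<le> j \<and> pairAt a n (map yv [0..<2*n+2]) r then - e else 0
                            else 0
          else 0) = (case (r, k) of (r, k) \<Rightarrow> Vv \<beta> r k)"
    (is "?L = ?R")
  proof -
    have L: "?L = (if \<exists>i<2*n+2. Fpt rho vrho c d a n (yv k) = Some (yv i)
          then let i = THE i. i < 2*n+2 \<and> Fpt rho vrho c d a n (yv k) = Some (map yv [0..<2*n+2] ! i);
                   l = lapidx rho vrho c d n (yv k);
                   e = sgn (rho l) * \<bar>1 / rho l\<bar> powr - \<beta>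
               in if r = i then e
                  else if k < i
                       then if k \<le> r \<and> r < i \<and> (odd r \<and> r < 2*n+1) then e
                            else if 0 < r \<and> k \<le> r - 1 \<and> r - 1 < i \<and> (odd (r - 1) \<and> r - 1 < 2*n+1) then - e else 0
                       else if i < k
                            then if i < r \<and> r \<le> k \<and> (odd (r - 1) \<and> r - 1 < 2*n+1) then e
                                 else if i < r + 1 \<and> r + 1 \<le> k \<and> (odd r \<and> r < 2*n+1) then - e else 0
                            else 0
          else 0)"
      unfolding prod.case Yk ex pairAt_iff by (rule refl)
    show ?thesis
    proof (cases "k div 2 + 1 = h")
      case True
      then have "Fpt rho vrho c d a n (yv k) = None" using F by simp
      then have nex: "\<not> (\<exists>i<2*n+2. Fpt rho vrho c d a n (yv k) = Some (yv i))" by simp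
      show ?thesis by (subst L, simp only: prod.case Vv_def nex True if_False if_True simp_thms)
    next
      case False
      then have Fk: "Fpt rho vrho c d a n (yv k) = Some (yv (dest k))" and
        lk: "lapidx rho vrho c d n (yv k) = lp (k div 2)" using F by simp_all
      have e1: "\<exists>i<2*n+2. Fpt rho vrho c d a n (yv k) = Some (yv i)" using Fk dest_lt by blast
      have th: "(THE i. i < 2*n+2 \<and> Fpt rho vrho c d a n (yv k) = Some (map yv [0..<2*n+2] ! i)) = dest k"
      proof (rule the_equality)
        show "dest k < 2*n+2 \<and> Fpt rho vrho c d a n (yv k) = Some (map yv [0..<2*n+2] ! dest k)"
          using Fk dest_lt Yi[OF dest_lt] by simp
      next
        fix i assume "i < 2*n+2 \<and> Fpt rho vrho c d a n (yv k) = Some (map yv [0..<2*n+2] ! i)"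
        then have "i < 2*n+2" "yv (dest k) = yv i" using Fk Yi by auto
        then show "i = dest k" using yv_inj[OF _ dest_lt] by metis
      qed
      have nF: "(k div 2 + 1 = h) = False" using False by simp
      have e1': "(\<exists>i<2*n+2. Fpt rho vrho c d a n (yv k) = Some (yv i)) = True" using e1 by simp
      show ?thesis by (subst L, simp only: th lk Let_def prod.case Vv_def nF e1' if_True if_False Vf_real[symmetric] mult.assoc)
    qed
  qed
qed simp_all


lemma Bv_alt: "Bv r i = (if i = r div 2 then (if even r then -1 else 1) else 0)"
proof (cases "even r")
  case True
  then obtain t where t: "r = 2*t" by blast
  show ?thesis unfolding Bv_def t by auto
next
  case False
  then obtain t where t: "r = 2*t+1" using oddE by blast
  show ?thesis unfolding Bv_def t by auto
qed

lemma SB: "r < 2*n+2 \<Longrightarrow> (\<Sum>i\<in>{0..<n+1}. Bv r i) = (if even r then -1 else 1)"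
proof -
  assume r: "r < 2*n+2"
  have "r div 2 \<in> {0..<n+1}" using r by auto
  then show ?thesis unfolding Bv_alt by (simp add: sum.delta)
qed

lemma SV: "j < n+1 \<Longrightarrow> (\<Sum>k\<in>{0..<2*n+2}. Vv \<beta> r k * Bv k j) = Vv \<beta> r (2*j+1) - Vv \<beta> r (2*j)"
proof -
  assume j: "j < n+1"
  have "Vv \<beta> r k * Bv k j = (if k = 2*j+1 then Vv \<beta> r (2*j+1) else 0) + (if k = 2*j then - Vv \<beta> r (2*j) else 0)" for k
    unfolding Bv_def by auto
  then have "(\<Sum>k\<in>{0..<2*n+2}. Vv \<beta> r k * Bv k j) =
     (\<Sum>k\<in>{0..<2*n+2}. (if k = 2*j+1 then Vv \<beta> r (2*j+1) else 0)) + (\<Sum>k\<in>{0..<2*n+2}. (if k = 2*j then - Vv \<beta> r (2*j) else 0))"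
    by (simp add: sum.distrib)
  also have "\<dots> = Vv \<beta> r (2*j+1) - Vv \<beta> r (2*j)" using j by (simp add: sum.delta)
  finally show ?thesis .
qed

lemma entry: "r < 2*n+2 \<Longrightarrow> j < n+1 \<Longrightarrow>
  (if even r then -1 else 1) * Wt \<beta> j = Vv \<beta> r (2*j+1) - Vv \<beta> r (2*j)"
proof -
  assume r: "r < 2*n+2" and j: "j < n+1"
  have d1: "(2*j+1) div 2 = j" "(2*j) div 2 = j" by simp_all
  show ?thesis
  proof (cases "j + 1 = h")
    case True then show ?thesis unfolding Wt_def Vv_def d1 by simp
  next
    case False
    let ?l = "lp j"
    have l: "?l \<in> {1..n}" using lp[of j] j False by simp
    define w where "w = \<bar>1 / rho ?l\<bar> powr (-\<beta>)"
    have rl: "r \<le> 2*n+1" "j \<le> n" using r j by simp_all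
    show ?thesis
    proof (cases "0 < rho ?l")
      case True
      have "dest (2*j+1) = 2*n+1" "dest (2*j) = 0" unfolding dest_def d1 using True by simp_all
      then have "Vv \<beta> r (2*j+1) - Vv \<beta> r (2*j) = w * real_of_int (Vf (2*n+1) (2*n+1) (2*j+1) r - Vf (2*n+1) 0 (2*j) r)"
        unfolding Vv_def d1 w_def using False True by (simp add: algebra_simps)
      also have "\<dots> = w * (if even r then -1 else 1)" unfolding VfA[OF rl] by simp
      finally show ?thesis unfolding Wt_def w_def using False by simp
    next
      case neg: False
      then have "rho ?l < 0" using rho_ne[OF l] by auto
      have "dest (2*j+1) = 0" "dest (2*j) = 2*n+1" unfolding dest_def d1 using neg by simp_all
      then have "Vv \<beta> r (2*j+1) - Vv \<beta> r (2*j) = - w * real_of_int (Vf (2*n+1) 0 (2*j+1) r - Vf (2*n+1) (2*n+1) (2*j) r)"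
        unfolding Vv_def d1 w_def using False \<open>rho ?l < 0\<close> by (simp add: algebra_simps)
      also have "\<dots> = - w * (if even r then 1 else -1)" unfolding VfB[OF rl] by simp
      finally show ?thesis unfolding Wt_def w_def using False by simp
    qed
  qed
qed

lemma main: "Bmat rho vrho c d a n * Qmat rho vrho c d a n \<beta> = Vmat rho vrho c d a n \<beta> * Bmat rho vrho c d a n"
  unfolding Bmat_eq Qmat_eq Vmat_eq
proof (rule eq_matI)
  let ?B = "mat (2*n+2) (n+1) (\<lambda>(r,k). Bv r k)" and ?Q = "mat (n+1) (n+1) (\<lambda>(i,j). Wt \<beta> j)"
    and ?V = "mat (2*n+2) (2*n+2) (\<lambda>(r,k). Vv \<beta> r k)"
  fix r j assume r0: "r < dim_row (?V * ?B)" and j0: "j < dim_col (?V * ?B)"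
  have r: "r < 2*n+2" and j: "j < n+1" using r0 j0 by simp_all
  have "(?B * ?Q) $$ (r,j) = (\<Sum>i\<in>{0..<n+1}. Bv r i * Wt \<beta> j)"
    using r j by (simp add: scalar_prod_def)
  also have "\<dots> = (\<Sum>i\<in>{0..<n+1}. Bv r i) * Wt \<beta> j" by (rule sum_distrib_right[symmetric])
  also have "\<dots> = (if even r then -1 else 1) * Wt \<beta> j" using SB[OF r] by simp
  also have "\<dots> = Vv \<beta> r (2*j+1) - Vv \<beta> r (2*j)" by (rule entry[OF r j])
  also have "\<dots> = (\<Sum>k\<in>{0..<2*n+2}. Vv \<beta> r k * Bv k j)" using SV[OF j] by simp
  also have "\<dots> = (?V * ?B) $$ (r,j)"
    using r j by (simp add: scalar_prod_def)
  finally show "(?B * ?Q) $$ (r,j) = (?V * ?B) $$ (r,j)" .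
qed simp_all

end

theorem lemma1:
  fixes n :: nat and rho vrho :: "nat \<Rightarrow> real" and c d :: real
    and a :: "nat \<Rightarrow> real" and h :: nat and \<beta> :: real
  assumes "n \<ge> 1"
    and "\<forall>i\<in>{1..n}. 0 < \<bar>rho i\<bar> \<and> \<bar>rho i\<bar> < 1"
    and "\<exists>U::real set. open U \<and> U \<noteq> {} \<and> (\<forall>i\<in>{1..n}. ifs rho vrho i ` U \<subseteq> U)
           \<and> (\<forall>i\<in>{1..n}. \<forall>j\<in>{1..n}. i \<noteq> j \<longrightarrow> ifs rho vrho i ` U \<inter> ifs rho vrho j ` U = {})"
    and "c \<le> d"
    and "strict_mono_on {1..n+2} a"
    and "h \<in> {1..n+1}"
    and "{c..d} = {a h<..<a (h+1)} \<union> (\<Union>i\<in>{1..n}. ifs rho vrho i ` {c..d})"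
    and "\<forall>i\<in>{1..n}. \<forall>j\<in>{1..n}. i \<noteq> j \<longrightarrow>
           interior (ifs rho vrho i ` {c..d}) \<inter> interior (ifs rho vrho j ` {c..d}) = {}"
    and "\<forall>i\<in>{1..n}. {a h<..<a (h+1)} \<inter> ifs rho vrho i ` {c..d} = {}"
    and "a ` {1..n+2} = {a h, a (h+1)} \<union> (\<Union>i\<in>{1..n}. {ifs rho vrho i c, ifs rho vrho i d})"
    and "\<forall>p\<in>endpts a n. finite (orbit rho vrho c d a n p)"
  shows "Bmat rho vrho c d a n * Qmat rho vrho c d a n \<beta> = Vmat rho vrho c d a n \<beta> * Bmat rho vrho c d a n"
proof -
  interpret S n rho vrho c d a h
    using assms by unfold_locales auto
  show ?thesis by (rule main)
qed

end
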